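(* Let $m\ge n$ be positive integers, $\pi$ uniform on $S_{n+m}$, and $\mathbf L=(l_1,\dots,l_n)$ a fixed $n$-tuple of distinct elements of $[m]$. For $i\in[n]$ let $$d_i=\mathbb 1\{\pi(i)\in[n],\ \pi(n+l_i)\in[n+m]\setminus[n]\}-\mathbb 1\{\pi(i)\in[n+m]\setminus[n],\ \pi(n+l_i)\in[n]\}.$$ Then $\sum_{i=1}^n d_i$ has mean zero and is $\mathrm{SG}(2n)$.
   Context: $S_{n+m}$ is the symmetric group on $[n+m]=\{1,\dots,n+m\}$. A real random variable $X$ is $\mathrm{SG}(\sigma^2)$ if $\mathbb E[\exp\{\lambda(X-\mathbb EX)\}]\le\exp(\lambda^2\sigma^2/2)$ for all $\lambda\in\mathbb R$. *)

theory Defs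
  imports "HOL-Probability.Probability" "HOL-Combinatorics.Permutations"
begin

definition subgaussian_pmf :: "'a pmf \<Rightarrow> ('a \<Rightarrow> real) \<Rightarrow> real \<Rightarrow> bool" where
  "subgaussian_pmf p X sigma2 \<longleftrightarrow>
     (\<forall>lam::real. measure_pmf.expectation p (\<lambda>x. exp (lam * (X x - measure_pmf.expectation p X)))
                   \<le> exp (lam^2 * sigma2 / 2))"

definition uniform_perm :: "nat \<Rightarrow> (nat \<Rightarrow> nat) pmf" where
  "uniform_perm N = pmf_of_set {p. p permutes {1..N}}"

definition d_term :: "nat \<Rightarrow> nat \<Rightarrow> (nat \<Rightarrow> nat) \<Rightarrow> (nat \<Rightarrow> nat) \<Rightarrow> nat \<Rightarrow> real" where
  "d_term n m l \<pi> i =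
     (if \<pi> i \<in> {1..n} \<and> \<pi> (n + l i) \<in> {1..n+m} - {1..n} then 1 else 0)
   - (if \<pi> i \<in> {1..n+m} - {1..n} \<and> \<pi> (n + l i) \<in> {1..n} then 1 else 0)"

end

theory Submission
  imports Defs
begin

definition tau :: "nat \<Rightarrow> (nat\<Rightarrow>nat) \<Rightarrow> nat set \<Rightarrow> nat \<Rightarrow> nat" where
 "tau n l A x = (if x \<in> A then n + l x else if x \<in> (\<lambda>i. n + l i) ` A
     then the_inv_into A (\<lambda>i. n + l i) x else x)"

locale setup_tau =
  fixes n m :: nat and l :: "nat \<Rightarrow> nat" and A :: "nat set"
  assumes inj: "inj_on l {1..n}" and img: "l ` {1..n} \<subseteq> {1..m}" and A: "A \<subseteq> {1..n}"
begin

lemma injf: "inj_on (\<lambda>i. n + l i) A"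
  using inj A by (auto simp: inj_on_def)

lemma tau_i: "i \<in> {1..n} \<Longrightarrow> tau n l A i = (if i \<in> A then n + l i else i)"
  using A img unfolding tau_def by force

lemma tau_nl: assumes i: "i \<in> {1..n}"
  shows "tau n l A (n + l i) = (if i \<in> A then i else n + l i)"
proof -
  have "l i \<in> {1..m}" using img i by blast
  then have li: "l i \<ge> 1" by simp
  have nA: "n + l i \<notin> A"
  proof
    assume "n + l i \<in> A"
    then have "n + l i \<le> n" using A by auto
    then show False using li by simp
  qed
  show ?thesis
  proof (cases "i \<in> A")
    case True
    have "the_inv_into A (\<lambda>i. n + l i) (n + l i) = i"
      by (rule the_inv_into_f_f[OF injf True])
    moreover have "n + l i \<in> (\<lambda>i. n + l i) ` A" using True by blast
    ultimately show ?thesis using nA True unfolding tau_def by simp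
  next
    case False
    have "n + l i \<notin> (\<lambda>i. n + l i) ` A"
    proof
      assume "n + l i \<in> (\<lambda>i. n + l i) ` A"
      then obtain j where j: "j \<in> A" "l i = l j" by auto
      have "j \<in> {1..n}" using j A by blast
      then have "i = j" using inj i j(2) unfolding inj_on_def by blast
      then show False using False j by simp
    qed
    then show ?thesis using nA False unfolding tau_def by simp
  qed
qed

lemma tau_out: assumes x: "x \<notin> {1..n+m}" shows "tau n l A x = x"
proof -
  have "x \<notin> A" using A x by auto
  moreover have "x \<notin> (\<lambda>i. n + l i) ` A"
  proof
    assume "x \<in> (\<lambda>i. n + l i) ` A"
    then obtain j where j: "j \<in> A" "x = n + l j" by blast
    then have "l j \<in> {1..m}" using A img by blast
    then show False using j x by simp
  qed
  ultimately show ?thesis unfolding tau_def by simp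
qed

lemma tau_invol: "tau n l A (tau n l A x) = x"
proof (cases "x \<in> A")
  case True
  then have "x \<in> {1..n}" using A by auto
  then show ?thesis using True tau_i tau_nl by simp
next
  case False
  show ?thesis
  proof (cases "x \<in> (\<lambda>i. n + l i) ` A")
    case True
    then obtain j where j: "j \<in> A" "x = n + l j" by auto
    then have "j \<in> {1..n}" using A by auto
    then show ?thesis using j tau_i tau_nl by simp
  next
    case F2: False
    then show ?thesis using False unfolding tau_def by simp
  qed
qed

lemma tau_permutes: "tau n l A permutes {1..n+m}"
  unfolding permutes_def
proof (intro conjI allI impI)
  fix x assume "x \<notin> {1..n+m}" then show "tau n l A x = x" by (rule tau_out)
next
  fix y show "\<exists>!x. tau n l A x = y"
  proof (rule ex1I[of _ "tau n l A y"])
    show "tau n l A (tau n l A y) = y" by (rule tau_invol)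
  next
    fix x assume "tau n l A x = y"
    then show "x = tau n l A y" using tau_invol[of x] by simp
  qed
qed

lemma d_tau: assumes i: "i \<in> {1..n}"
  shows "d_term n m l (\<pi> \<circ> tau n l A) i = (if i \<in> A then - d_term n m l \<pi> i else d_term n m l \<pi> i)"
  using tau_i[OF i] tau_nl[OF i] unfolding d_term_def by auto

end

lemma K_nonneg: fixes x :: real assumes "x \<ge> 0" shows "sinh x \<le> x * cosh x"
proof -
  have "0 * cosh 0 - sinh (0::real) \<le> x * cosh x - sinh x"
  proof (rule DERIV_nonneg_imp_nondecreasing[OF assms, where f="\<lambda>x. x * cosh x - sinh x"])
    fix t :: real assume t: "0 \<le> t" "t \<le> x"
    have "DERIV (\<lambda>x. x * cosh x - sinh x) t :> (1 * cosh t + t * sinh t - cosh t)"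
      by (auto intro!: derivative_eq_intros)
    moreover have "0 \<le> 1 * cosh t + t * sinh t - cosh t" using t by simp
    ultimately show "\<exists>y. DERIV (\<lambda>x. x * cosh x - sinh x) t :> y \<and> y \<ge> 0" by blast
  qed
  then show ?thesis by simp
qed

lemma cosh_le: fixes x :: real assumes "x \<ge> 0" shows "cosh x \<le> exp (x^2/2)"
proof -
  have "cosh x * exp (-(x^2)/2) \<le> cosh 0 * exp (-(0^2)/2)"
  proof (rule DERIV_nonpos_imp_nonincreasing[OF assms, where f="\<lambda>x. cosh x * exp (-(x^2)/2)"])
    fix t :: real assume t: "0 \<le> t" "t \<le> x"
    have "DERIV (\<lambda>x. cosh x * exp (-(x^2)/2)) t :> (sinh t * exp (-(t^2)/2) + cosh t * (exp (-(t^2)/2) * (- t)))"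
      by (auto intro!: derivative_eq_intros simp: power2_eq_square)
    moreover have "sinh t * exp (-(t^2)/2) + cosh t * (exp (-(t^2)/2) * (- t)) = exp (-(t^2)/2) * (sinh t - t * cosh t)"
      by (simp add: algebra_simps)
    moreover have "exp (-(t^2)/2) * (sinh t - t * cosh t) \<le> 0"
      using K_nonneg[OF t(1)] by (intro mult_nonneg_nonpos) auto
    ultimately show "\<exists>y. DERIV (\<lambda>x. cosh x * exp (-(x^2)/2)) t :> y \<and> y \<le> 0" by metis
  qed
  then have "cosh x * exp (-(x^2)/2) \<le> 1" by simp
  then have "cosh x * exp (-(x^2)/2) * exp (x^2/2) \<le> exp (x^2/2)" by simp
  moreover have "cosh x * exp (-(x^2)/2) * exp (x^2/2) = cosh x"
    by (simp add: mult.assoc exp_add[symmetric])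
  ultimately show ?thesis by (simp only:)
qed

lemma cosh_bound:
  fixes y :: real
  shows "exp y + exp (-y) \<le> 2 * exp (y^2/2)"
proof -
  have "cosh \<bar>y\<bar> \<le> exp (\<bar>y\<bar>^2/2)" by (rule cosh_le) simp
  then have "cosh y \<le> exp (y^2/2)" by simp
  then show ?thesis by (simp add: cosh_def)
qed
theorem mainTheorem12:
  fixes n m :: nat and l :: "nat \<Rightarrow> nat"
  assumes "1 \<le> n" and "n \<le> m"
    and "inj_on l {1..n}" and "l ` {1..n} \<subseteq> {1..m}"
  shows "measure_pmf.expectation (uniform_perm (n + m)) (\<lambda>\<pi>. \<Sum>i\<in>{1..n}. d_term n m l \<pi> i) = 0
       \<and> subgaussian_pmf (uniform_perm (n + m)) (\<lambda>\<pi>. \<Sum>i\<in>{1..n}. d_term n m l \<pi> i) (2 * real n)"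
proof -
  define P where "P = {p. p permutes {1..n+m}}"
  define I where "I = {1..n::nat}"
  define S where "S = (\<lambda>\<pi>. \<Sum>i\<in>I. d_term n m l \<pi> i)"
  have finP: "finite P" unfolding P_def by (rule finite_permutations) simp
  have neP: "P \<noteq> {}" unfolding P_def using permutes_id by blast
  have finI: "finite I" unfolding I_def by simp
  have setupA: "setup_tau n m l A" if "A \<subseteq> I" for A
    using assms that unfolding I_def by unfold_locales auto
  have Etau: "S (\<pi> \<circ> tau n l A) = (\<Sum>i\<in>I. if i \<in> A then - d_term n m l \<pi> i else d_term n m l \<pi> i)"
    if "A \<subseteq> I" for A \<pi>
    unfolding S_def using setup_tau.d_tau[OF setupA[OF that]] unfolding I_def
    by (intro sum.cong) auto
  have reidx: "sum f P = sum (\<lambda>p. f (p \<circ> tau n l A)) P" if "A \<subseteq> I" for A and f :: "_ \<Rightarrow> real"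
    unfolding P_def by (rule sum_permutations_compose_right[OF setup_tau.tau_permutes[OF setupA[OF that]]])
  have E: "measure_pmf.expectation (uniform_perm (n + m)) f = sum f P / card P" for f :: "_ \<Rightarrow> real"
    unfolding uniform_perm_def P_def[symmetric] by (rule integral_pmf_of_set[OF neP finP])
  have sum0: "sum S P = 0"
  proof -
    have "sum S P = sum (\<lambda>p. S (p \<circ> tau n l I)) P" by (rule reidx) simp
    also have "\<dots> = sum (\<lambda>p. - S p) P"
    proof (intro sum.cong refl)
      fix p show "S (p \<circ> tau n l I) = - S p" using Etau[of I p] by (simp add: S_def sum_negf)
    qed
    finally show ?thesis by (simp add: sum_negf)
  qed
  have mean: "measure_pmf.expectation (uniform_perm (n + m)) S = 0"
    using E sum0 by simp
  have sg: "measure_pmf.expectation (uniform_perm (n + m)) (\<lambda>x. exp (lam * (S x - 0)))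
               \<le> exp (lam^2 * (2 * real n) / 2)" for lam :: real
  proof -
    define g where "g = (\<lambda>p. exp (lam * S p))"
    have per_p: "(\<Sum>A\<in>Pow I. g (p \<circ> tau n l A)) \<le> 2^n * exp (real n * lam^2/2)" for p
    proof -
      have "(\<Sum>A\<in>Pow I. g (p \<circ> tau n l A)) =
          (\<Sum>A\<in>Pow I. (\<Prod>i\<in>A. exp (- lam * d_term n m l p i)) * (\<Prod>i\<in>I-A. exp (lam * d_term n m l p i)))"
      proof (intro sum.cong refl)
        fix A assume "A \<in> Pow I"
        then have AI: "A \<subseteq> I" by auto
        have "g (p \<circ> tau n l A) = (\<Prod>i\<in>I. exp (lam * (if i \<in> A then - d_term n m l p i else d_term n m l p i)))"
          unfolding g_def Etau[OF AI] sum_distrib_left using finI by (simp add: exp_sum)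
        also have "\<dots> = (\<Prod>i\<in>A. exp (lam * (if i \<in> A then - d_term n m l p i else d_term n m l p i)))
             * (\<Prod>i\<in>I-A. exp (lam * (if i \<in> A then - d_term n m l p i else d_term n m l p i)))"
          by (subst prod.subset_diff[OF AI finI]) (rule mult.commute)
        also have "\<dots> = (\<Prod>i\<in>A. exp (- lam * d_term n m l p i)) * (\<Prod>i\<in>I-A. exp (lam * d_term n m l p i))"
          by (intro arg_cong2[where f="(*)"] prod.cong) auto
        finally show "g (p \<circ> tau n l A) = \<dots>" .
      qed
      also have "\<dots> = (\<Prod>i\<in>I. exp (- lam * d_term n m l p i) + exp (lam * d_term n m l p i))"
        by (rule prod_add[symmetric, OF finI])
      also have "\<dots> \<le> (\<Prod>i\<in>I. 2 * exp (lam^2/2))"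
      proof (intro prod_mono conjI)
        fix i
        show "0 \<le> exp (- lam * d_term n m l p i) + exp (lam * d_term n m l p i)"
          by (intro add_nonneg_nonneg) auto
        have d: "d_term n m l p i \<in> {-1, 0, 1}" unfolding d_term_def by auto
        have "exp (lam * d_term n m l p i) + exp (- (lam * d_term n m l p i))
             \<le> 2 * exp ((lam * d_term n m l p i)^2/2)" by (rule cosh_bound)
        also have "\<dots> \<le> 2 * exp (lam^2/2)"
          using d by (auto simp: power_mult_distrib)
        finally show "exp (- lam * d_term n m l p i) + exp (lam * d_term n m l p i) \<le> 2 * exp (lam^2/2)"
          by (simp add: add.commute)
      qed
      also have "\<dots> = 2^n * exp (real n * lam^2/2)"
        unfolding I_def by (simp add: power_mult_distrib exp_of_nat_mult[symmetric] mult.assoc)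
      finally show ?thesis .
    qed
    have "2^n * sum g P = (\<Sum>A\<in>Pow I. sum g P)"
      using finI by (simp add: card_Pow I_def)
    also have "\<dots> = (\<Sum>A\<in>Pow I. \<Sum>p\<in>P. g (p \<circ> tau n l A))"
      by (intro sum.cong refl reidx) auto
    also have "\<dots> = (\<Sum>p\<in>P. \<Sum>A\<in>Pow I. g (p \<circ> tau n l A))"
      by (rule sum.swap)
    also have "\<dots> \<le> (\<Sum>p\<in>P. 2^n * exp (real n * lam^2/2))"
      by (intro sum_mono per_p)
    also have "\<dots> = 2^n * (card P * exp (real n * lam^2/2))" by simp
    finally have "sum g P \<le> card P * exp (real n * lam^2/2)" by simp
    then have "sum g P / card P \<le> exp (real n * lam^2/2)"
      using finP neP by (simp add: divide_le_eq card_gt_0_iff mult.commute)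
    moreover have "exp (real n * lam^2/2) \<le> exp (lam^2 * (2 * real n) / 2)"
    proof -
      have "0 \<le> lam^2 * real n" by simp
      then have "real n * lam^2/2 \<le> lam^2 * (2 * real n) / 2" by (simp add: algebra_simps)
      then show ?thesis by (rule exp_mono)
    qed
    ultimately have "sum g P / card P \<le> exp (lam^2 * (2 * real n) / 2)" by (rule order.trans)
    then show ?thesis using E[of g] unfolding g_def by simp
  qed
  show ?thesis
    using mean sg unfolding subgaussian_pmf_def S_def I_def by simp
qed

end
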